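(* Let $Q$ be a quadrilateral in $K^2$. The $Q$-pairs of bisectors of $Q$ are precisely the degenerations of the conics in the pencil of $Q$.
   Context: $K$ is a field of characteristic $\neq 2$; we work in $K^2$. Every line $L$ has an equation $tX-uY+v=0$ normalized so that $t=1$ if $u=0$ and $u=1$ if $u\neq 0$; coefficients denoted $t_L,u_L,v_L$. A quadrilateral $Q=ABA'B'$ consists of four distinct lines $A,B,A',B'$ (sides), not all through one point, with adjacent sides ($A,B$; $B,A'$; $A',B'$; $B',A$) not parallel; opposite sides ($A,A'$; $B,B'$) may be parallel. Vertices: $A\cap B$, $B\cap A'$, $A'\cap B'$, $B'\cap A$ (two may coincide if three sides are concurrent). The centroid of $Q$ is the average of the four vertices (equivalently the midpoint of the midpoints of the diagonals). Let $\alpha=t_Au_Bu_{A'}u_{B'}-u_At_Bu_{A'}u_{B'}+u_Au_Bt_{A'}u_{B'}-u_Au_Bu_{A'}t_{B'}$, $\beta=t_Au_Bt_{A'}u_{B'}-u_At_Bu_{A'}t_{B'}$, $\gamma=t_At_Bt_{A'}u_{B'}-t_At_Bu_{A'}t_{B'}+t_Au_Bt_{A'}t_{B'}-u_At_Bt_{A'}t_{B'}$, and $\langle \mathbf v,\mathbf w\rangle_Q=\mathbf v^T\begin{pmatrix}\gamma&-\beta\\-\beta&\alpha\end{pmatrix}\mathbf w$ on $K^2$. Lines $\ell_1,\ell_2$ are $Q$-orthogonal if $\langle (u_{\ell_1},t_{\ell_1}),(u_{\ell_2},t_{\ell_2})\rangle_Q=0$. A line $\ell$ crosses a pair $\{\ell_1,\ell_2\}$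 if distinct from both and not parallel to both; $\mathrm{mid}_{\{\ell_1,\ell_2\}}(\ell)$ is the midpoint of the points where $\ell$ meets $\ell_1,\ell_2$ (the point at infinity of $\ell$ if one is at infinity). $\ell$ bisects $Q$ (is a bisector of $Q$) if $\mathrm{mid}_{\mathsf P}(\ell)$ is the same for all pairs $\mathsf P$ among $\{A,A'\},\{B,B'\}$ that $\ell$ crosses; this common point is the midpoint of the bisector. A pair $\{\ell_1,\ell_2\}$ of bisectors (possibly $\ell_1=\ell_2$) is $Q$-antipodal if the midpoint of their midpoints is the centroid of $Q$, and is a $Q$-pair if it is $Q$-antipodal and $Q$-orthogonal. A conic is a quadratic polynomial in $K[X,Y]$. Let $f_1$ be a product of linear polynomials defining $A$ and $A'$, and $f_2$ a product of linear polynomials defining $B$ and $B'$. The pencil of $Q$ is $\{af_1+bf_2: a,b\in K \text{ not both } 0\}$. A pair of lines $\{\ell_1,\ell_2\}$ (possibly $\ell_1=\ell_2$) is a degeneration of a conic $f$ if there is $\lambda\in K$ such that the zero set of $f+\lambda$ is $\ell_1\cup\ell_2$. *)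

theory Defs
  imports Main
begin

text \<open>Points of K^2 are pairs. A line with normalized equation t X - u Y + v = 0
  is represented by the triple (t,u,v).\<close>

type_synonym 'a pt = "'a \<times> 'a"
type_synonym 'a ln = "'a \<times> 'a \<times> 'a"

definition tL :: "'a ln \<Rightarrow> 'a" where "tL L = fst L"
definition uL :: "'a ln \<Rightarrow> 'a" where "uL L = fst (snd L)"
definition vL :: "'a ln \<Rightarrow> 'a" where "vL L = snd (snd L)"

definition is_line :: "'a::field ln \<Rightarrow> bool" where
  "is_line L \<longleftrightarrow> (uL L = 0 \<and> tL L = 1) \<or> uL L = 1"

definition lin :: "'a::field ln \<Rightarrow> 'a pt \<Rightarrow> 'a" where
  "lin L p = tL L * fst p - uL L * snd p + vL L"

definition on_line :: "'a::field pt \<Rightarrow> 'a ln \<Rightarrow> bool" where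
  "on_line p L \<longleftrightarrow> lin L p = 0"

definition line_set :: "'a::field ln \<Rightarrow> 'a pt set" where
  "line_set L = {p. on_line p L}"

text \<open>Parallel (includes equal lines).\<close>
definition parallel :: "'a::field ln \<Rightarrow> 'a ln \<Rightarrow> bool" where
  "parallel L M \<longleftrightarrow> tL L * uL M - uL L * tL M = 0"

text \<open>Intersection point of two non-parallel lines.\<close>
definition meet :: "'a::field ln \<Rightarrow> 'a ln \<Rightarrow> 'a pt" where
  "meet L M = (THE p. on_line p L \<and> on_line p M)"

definition midpt :: "'a::field pt \<Rightarrow> 'a pt \<Rightarrow> 'a pt" where
  "midpt p q = ((fst p + fst q) / 2, (snd p + snd q) / 2)"

text \<open>Affine points together with points at infinity; the point at infinity
  of a (normalized) line L is represented by Infty (t_L, u_L).\<close>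
datatype 'a ppt = Fin "'a \<times> 'a" | Infty "'a \<times> 'a"

definition infpt :: "'a::field ln \<Rightarrow> 'a ppt" where
  "infpt L = Infty (tL L, uL L)"

definition is_quad :: "'a::field ln \<Rightarrow> 'a ln \<Rightarrow> 'a ln \<Rightarrow> 'a ln \<Rightarrow> bool" where
  "is_quad A B A' B' \<longleftrightarrow>
     is_line A \<and> is_line B \<and> is_line A' \<and> is_line B' \<and>
     A \<noteq> B \<and> A \<noteq> A' \<and> A \<noteq> B' \<and> B \<noteq> A' \<and> B \<noteq> B' \<and> A' \<noteq> B' \<and>
     \<not> (\<exists>p. on_line p A \<and> on_line p B \<and> on_line p A' \<and> on_line p B') \<and>
     \<not> parallel A B \<and> \<not> parallel B A' \<and> \<not> parallel A' B' \<and> \<not> parallel B' A"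

definition centroid :: "'a::field ln \<Rightarrow> 'a ln \<Rightarrow> 'a ln \<Rightarrow> 'a ln \<Rightarrow> 'a pt" where
  "centroid A B A' B' =
     (let P1 = meet A B; P2 = meet B A'; P3 = meet A' B'; P4 = meet B' A in
      ((fst P1 + fst P2 + fst P3 + fst P4) / 4, (snd P1 + snd P2 + snd P3 + snd P4) / 4))"

definition crosses :: "'a::field ln \<Rightarrow> 'a ln \<Rightarrow> 'a ln \<Rightarrow> bool" where
  "crosses l l1 l2 \<longleftrightarrow> l \<noteq> l1 \<and> l \<noteq> l2 \<and> \<not> (parallel l l1 \<and> parallel l l2)"

text \<open>mid of l with respect to the pair {l1,l2} (meaningful when l crosses the pair).\<close>
definition mid :: "'a::field ln \<Rightarrow> 'a ln \<Rightarrow> 'a ln \<Rightarrow> 'a ppt" where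
  "mid l1 l2 l =
     (if parallel l l1 \<or> parallel l l2 then infpt l
      else Fin (midpt (meet l l1) (meet l l2)))"

definition bisects :: "'a::field ln \<Rightarrow> 'a ln \<Rightarrow> 'a ln \<Rightarrow> 'a ln \<Rightarrow> 'a ln \<Rightarrow> bool" where
  "bisects A B A' B' l \<longleftrightarrow> is_line l \<and>
     (crosses l A A' \<and> crosses l B B' \<longrightarrow> mid A A' l = mid B B' l)"

text \<open>Midpoint of a bisector (every line crosses at least one of the pairs).\<close>
definition bis_mid :: "'a::field ln \<Rightarrow> 'a ln \<Rightarrow> 'a ln \<Rightarrow> 'a ln \<Rightarrow> 'a ln \<Rightarrow> 'a ppt" where
  "bis_mid A B A' B' l = (if crosses l A A' then mid A A' l else mid B B' l)"

definition antipodal :: "'a::field ln \<Rightarrow> 'a ln \<Rightarrow> 'a ln \<Rightarrow> 'a ln \<Rightarrow> 'a ln \<Rightarrow> 'a ln \<Rightarrow> bool" where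
  "antipodal A B A' B' l1 l2 \<longleftrightarrow>
     (\<exists>p1 p2. bis_mid A B A' B' l1 = Fin p1 \<and> bis_mid A B A' B' l2 = Fin p2 \<and>
              midpt p1 p2 = centroid A B A' B')"

definition qalpha :: "'a::field ln \<Rightarrow> 'a ln \<Rightarrow> 'a ln \<Rightarrow> 'a ln \<Rightarrow> 'a" where
  "qalpha A B A' B' =
     tL A * uL B * uL A' * uL B' - uL A * tL B * uL A' * uL B'
   + uL A * uL B * tL A' * uL B' - uL A * uL B * uL A' * tL B'"

definition qbeta :: "'a::field ln \<Rightarrow> 'a ln \<Rightarrow> 'a ln \<Rightarrow> 'a ln \<Rightarrow> 'a" where
  "qbeta A B A' B' = tL A * uL B * tL A' * uL B' - uL A * tL B * uL A' * tL B'"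

definition qgamma :: "'a::field ln \<Rightarrow> 'a ln \<Rightarrow> 'a ln \<Rightarrow> 'a ln \<Rightarrow> 'a" where
  "qgamma A B A' B' =
     tL A * tL B * tL A' * uL B' - tL A * tL B * uL A' * tL B'
   + tL A * uL B * tL A' * tL B' - uL A * tL B * tL A' * tL B'"

definition qform :: "'a::field ln \<Rightarrow> 'a ln \<Rightarrow> 'a ln \<Rightarrow> 'a ln \<Rightarrow> 'a pt \<Rightarrow> 'a pt \<Rightarrow> 'a" where
  "qform A B A' B' v w =
     qgamma A B A' B' * fst v * fst w - qbeta A B A' B' * fst v * snd w
   - qbeta A B A' B' * snd v * fst w + qalpha A B A' B' * snd v * snd w"

definition q_orth :: "'a::field ln \<Rightarrow> 'a ln \<Rightarrow> 'a ln \<Rightarrow> 'a ln \<Rightarrow> 'a ln \<Rightarrow> 'a ln \<Rightarrow> bool" where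
  "q_orth A B A' B' l1 l2 \<longleftrightarrow> qform A B A' B' (uL l1, tL l1) (uL l2, tL l2) = 0"

definition q_pair :: "'a::field ln \<Rightarrow> 'a ln \<Rightarrow> 'a ln \<Rightarrow> 'a ln \<Rightarrow> 'a ln \<Rightarrow> 'a ln \<Rightarrow> bool" where
  "q_pair A B A' B' l1 l2 \<longleftrightarrow>
     bisects A B A' B' l1 \<and> bisects A B A' B' l2 \<and>
     antipodal A B A' B' l1 l2 \<and> q_orth A B A' B' l1 l2"

text \<open>Conics of the pencil, represented by their evaluation on K^2
  (only zero sets of f + lambda are used).\<close>
definition pencil :: "'a::field ln \<Rightarrow> 'a ln \<Rightarrow> 'a ln \<Rightarrow> 'a ln \<Rightarrow> ('a pt \<Rightarrow> 'a) set" where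
  "pencil A B A' B' =
     {(\<lambda>p. a * (lin A p * lin A' p) + b * (lin B p * lin B' p)) | a b. a \<noteq> 0 \<or> b \<noteq> 0}"

definition degeneration :: "'a::field ln \<Rightarrow> 'a ln \<Rightarrow> ('a pt \<Rightarrow> 'a) \<Rightarrow> bool" where
  "degeneration l1 l2 f \<longleftrightarrow> (\<exists>c. {p. f p + c = 0} = line_set l1 \<union> line_set l2)"

end

theory Submission
  imports Defs
begin

definition dl :: "'a::field ln \<Rightarrow> 'a pt \<Rightarrow> 'a" where "dl X e = tL X * fst e - uL X * snd e"
definition P0 :: "'a::field ln \<Rightarrow> 'a pt" where "P0 l = (if uL l = 0 then (- vL l, 0) else (0, vL l))"
definition dir :: "'a::field ln \<Rightarrow> 'a pt" where "dir l = (uL l, tL l)"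
definition pt_at :: "'a::field pt \<Rightarrow> 'a pt \<Rightarrow> 'a \<Rightarrow> 'a pt" where
  "pt_at P e s = (fst P + s * fst e, snd P + s * snd e)"

lemma lin_pt_at: "lin X (pt_at P e s) = lin X P + s * dl X e"
  by (simp add: lin_def dl_def pt_at_def algebra_simps)

lemma P0_on: "is_line l \<Longrightarrow> lin l (P0 l) = 0"
  by (auto simp: is_line_def lin_def P0_def)

lemma dl_dir_self: "dl l (dir l) = 0"
  by (simp add: dl_def dir_def mult.commute)

lemma dir_nz: "is_line l \<Longrightarrow> dir l \<noteq> (0,0)"
  by (auto simp: is_line_def dir_def)

lemma dl_dir_par: "dl X (dir l) = 0 \<longleftrightarrow> parallel l X"
  by (auto simp: dl_def dir_def parallel_def algebra_simps)

lemma par_sym: "parallel L M \<longleftrightarrow> parallel M L"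
  by (auto simp: parallel_def algebra_simps)

lemma par_refl: "parallel L L"
  by (simp add: parallel_def mult.commute)

lemma par_tu: "is_line L \<Longrightarrow> is_line M \<Longrightarrow> parallel L M \<Longrightarrow> tL L = tL M \<and> uL L = uL M"
  by (auto simp: is_line_def parallel_def)

lemma line_eq: "L = M \<longleftrightarrow> tL L = tL M \<and> uL L = uL M \<and> vL L = vL M"
  by (cases L; cases M; simp add: tL_def uL_def vL_def)

lemma par_point_eq: "is_line L \<Longrightarrow> is_line M \<Longrightarrow> parallel L M \<Longrightarrow> lin L p = 0 \<Longrightarrow> lin M p = 0 \<Longrightarrow> L = M"
proof -
  assume a: "is_line L" "is_line M" "parallel L M" "lin L p = 0" "lin M p = 0"
  hence "tL L = tL M" "uL L = uL M" using par_tu by blast+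
  moreover have "vL L - vL M = lin L p - lin M p" using calculation by (simp add: lin_def algebra_simps)
  hence "vL L = vL M" using a(4,5) by simp
  ultimately show ?thesis by (simp add: line_eq)
qed

lemma par_trans: "is_line L \<Longrightarrow> is_line M \<Longrightarrow> is_line N \<Longrightarrow> parallel L M \<Longrightarrow> parallel L N \<Longrightarrow> parallel M N"
proof -
  assume a: "is_line L" "is_line M" "is_line N" "parallel L M" "parallel L N"
  have "tL M = tL L" "uL M = uL L" using par_tu[OF a(1,2,4)] by auto
  moreover have "tL N = tL L" "uL N = uL L" using par_tu[OF a(1,3,5)] by auto
  ultimately show ?thesis by (simp add: parallel_def mult.commute)
qed

lemma meet_uniq:
  assumes "\<not> parallel L M" "lin L p = 0" "lin M p = 0" "lin L q = 0" "lin M q = 0"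
  shows "p = q"
proof -
  let ?D = "tL L * uL M - uL L * tL M"
  have D: "?D \<noteq> 0" using assms(1) by (simp add: parallel_def)
  have e1: "tL L * (fst p - fst q) - uL L * (snd p - snd q) = 0"
  proof -
    have "tL L * (fst p - fst q) - uL L * (snd p - snd q) = lin L p - lin L q" by (simp add: lin_def algebra_simps)
    thus ?thesis using assms(2,4) by simp
  qed
  have e2: "tL M * (fst p - fst q) - uL M * (snd p - snd q) = 0"
  proof -
    have "tL M * (fst p - fst q) - uL M * (snd p - snd q) = lin M p - lin M q" by (simp add: lin_def algebra_simps)
    thus ?thesis using assms(3,5) by simp
  qed
  have "?D * (fst p - fst q) = uL M * (tL L * (fst p - fst q) - uL L * (snd p - snd q)) - uL L * (tL M * (fst p - fst q) - uL M * (snd p - snd q))"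
    by (simp add: algebra_simps)
  also have "\<dots> = 0" using e1 e2 by simp
  finally have x: "fst p = fst q" using D by simp
  have "?D * (snd p - snd q) = tL M * (tL L * (fst p - fst q) - uL L * (snd p - snd q)) - tL L * (tL M * (fst p - fst q) - uL M * (snd p - snd q))"
    by (simp add: algebra_simps)
  also have "\<dots> = 0" using e1 e2 by simp
  finally have y: "snd p = snd q" using D by simp
  show ?thesis using x y by (simp add: prod_eq_iff)
qed

lemma meet_eq:
  assumes "\<not> parallel L M" "lin L p = 0" "lin M p = 0"
  shows "meet L M = p"
  unfolding meet_def on_line_def
  apply (rule the_equality)
   apply (simp add: assms)
  using meet_uniq[OF assms(1) _ _ assms(2) assms(3)] by blast

lemma meet_commute: "meet L M = meet M L"
  by (simp add: meet_def conj_commute)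

lemma meet_param:
  assumes "is_line X" "\<not> parallel X M"
  shows "meet X M = pt_at (P0 X) (dir X) (- lin M (P0 X) / dl M (dir X))"
proof -
  have d: "dl M (dir X) \<noteq> 0" using assms(2) dl_dir_par by blast
  show ?thesis
    apply (rule meet_eq[OF assms(2)])
    using d by (simp_all add: lin_pt_at P0_on[OF assms(1)] dl_dir_self)
qed

lemma meet_on:
  assumes "is_line X" "\<not> parallel X M"
  shows "lin X (meet X M) = 0" "lin M (meet X M) = 0"
proof -
  have d: "dl M (dir X) \<noteq> 0" using assms(2) dl_dir_par by blast
  show "lin X (meet X M) = 0" "lin M (meet X M) = 0"
    using d by (simp_all add: meet_param[OF assms] lin_pt_at P0_on[OF assms(1)] dl_dir_self)
qed

lemma midpt_pt_at: fixes P e :: "'a::field pt" shows "(2::'a) \<noteq> 0 \<Longrightarrow> midpt (pt_at P e s1) (pt_at P e s2) = pt_at P e ((s1 + s2) / 2)"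
  by (simp add: midpt_def pt_at_def field_simps)

lemma pt_at_inj: "e \<noteq> (0,0) \<Longrightarrow> pt_at P e s1 = pt_at P e s2 \<longleftrightarrow> s1 = s2"
  by (cases e) (auto simp: pt_at_def)

lemma half_mul: fixes x :: "'a::field" shows "(2::'a) \<noteq> 0 \<Longrightarrow> x / 2 * 2 = x"
  by simp

lemma lin_midpt2: fixes p q :: "'a::field pt" assumes "(2::'a) \<noteq> 0"
  shows "2 * lin L (midpt p q) = lin L p + lin L q"
proof -
  have "2 * lin L (midpt p q) = tL L * ((fst p + fst q) / 2 * 2) - uL L * ((snd p + snd q) / 2 * 2) + 2 * vL L"
    by (simp add: lin_def midpt_def algebra_simps)
  also have "\<dots> = tL L * (fst p + fst q) - uL L * (snd p + snd q) + 2 * vL L"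
    by (simp only: half_mul[OF assms])
  also have "\<dots> = lin L p + lin L q" by (simp add: lin_def algebra_simps)
  finally show ?thesis .
qed

lemma QZ:
  fixes al be ga :: "'a::field"
  assumes "(2::'a) \<noteq> 0" "\<And>s. al * s^2 + be * s + ga = 0"
  shows "al = 0 \<and> be = 0 \<and> ga = 0"
proof -
  have g: "ga = 0" using assms(2)[of 0] by simp
  have a1: "al + be = 0" using assms(2)[of 1] g by simp
  have a2: "al - be = 0" using assms(2)[of "-1"] g by simp
  have "2 * al = (al + be) + (al - be)" by (simp add: algebra_simps)
  hence "2 * al = 0" using a1 a2 by simp
  hence "al = 0" using assms(1) by simp
  thus ?thesis using a1 g by simp
qed

definition qq :: "'a::field ln \<Rightarrow> 'a ln \<Rightarrow> 'a pt \<Rightarrow> 'a" where "qq X Y e = dl X e * dl Y e"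
definition rr :: "'a::field ln \<Rightarrow> 'a ln \<Rightarrow> 'a pt \<Rightarrow> 'a pt \<Rightarrow> 'a" where
  "rr X Y P e = lin X P * dl Y e + lin Y P * dl X e"

lemma prod_pt_at: "lin X (pt_at P e s) * lin Y (pt_at P e s) = qq X Y e * s^2 + rr X Y P e * s + lin X P * lin Y P"
  by (simp add: lin_pt_at qq_def rr_def power2_eq_square algebra_simps)

lemma qq_sym: "qq X Y e = qq Y X e" by (simp add: qq_def mult.commute)
lemma rr_sym: "rr X Y P e = rr Y X P e" by (simp add: rr_def add.commute)

lemma mid_sym: "mid X Y l = mid Y X l"
  by (auto simp: mid_def midpt_def add.commute)

lemma crosses_sym: "crosses l X Y = crosses l Y X"
  by (auto simp: crosses_def)

lemma mid_fin:
  fixes X Y l :: "'a::field ln"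
  assumes two: "(2::'a) \<noteq> 0" and l: "is_line l" and nX: "\<not> parallel l X" and nY: "\<not> parallel l Y"
  shows "mid X Y l = Fin (pt_at (P0 l) (dir l) (- rr X Y (P0 l) (dir l) / (2 * qq X Y (dir l))))"
proof -
  let ?P = "P0 l" and ?e = "dir l"
  have dX: "dl X ?e \<noteq> 0" using nX dl_dir_par by blast
  have dY: "dl Y ?e \<noteq> 0" using nY dl_dir_par by blast
  have "mid X Y l = Fin (midpt (meet l X) (meet l Y))" using nX nY by (simp add: mid_def)
  also have "midpt (meet l X) (meet l Y) = pt_at ?P ?e (((- lin X ?P / dl X ?e) + (- lin Y ?P / dl Y ?e)) / 2)"
    by (simp add: meet_param[OF l nX] meet_param[OF l nY] midpt_pt_at[OF two])
  also have "((- lin X ?P / dl X ?e) + (- lin Y ?P / dl Y ?e)) / 2 = - rr X Y ?P ?e / (2 * qq X Y ?e)"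
    using dX dY two by (simp add: rr_def qq_def field_simps)
  finally show ?thesis .
qed

lemma bis_S1:
  fixes X Y Z W l :: "'a::field ln"
  assumes two: "(2::'a) \<noteq> 0" and lines: "is_line X" "is_line Y" "is_line Z" "is_line W" "is_line l"
    and nXZ: "\<not> parallel X Z" and nXW: "\<not> parallel X W" and pX: "parallel l X"
  shows "(crosses l X Y \<and> crosses l Z W \<longrightarrow> mid X Y l = mid Z W l) \<longleftrightarrow>
         rr X Y (P0 l) (dir l) * qq Z W (dir l) = rr Z W (P0 l) (dir l) * qq X Y (dir l)"
proof -
  let ?P = "P0 l" and ?e = "dir l"
  have dX: "dl X ?e = 0" using pX dl_dir_par by blast
  have nZ: "\<not> parallel l Z" using par_trans[OF lines(5) lines(1) lines(3) pX] nXZ by blast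
  have nW: "\<not> parallel l W" using par_trans[OF lines(5) lines(1) lines(4) pX] nXW by blast
  have dZ: "dl Z ?e \<noteq> 0" using nZ dl_dir_par by blast
  have dW: "dl W ?e \<noteq> 0" using nW dl_dir_par by blast
  have qZW: "qq Z W ?e \<noteq> 0" using dZ dW by (simp add: qq_def)
  have qXY: "qq X Y ?e = 0" using dX by (simp add: qq_def)
  have rXY: "rr X Y ?P ?e = lin X ?P * dl Y ?e" using dX by (simp add: rr_def)
  have R: "(rr X Y ?P ?e * qq Z W ?e = rr Z W ?P ?e * qq X Y ?e) \<longleftrightarrow> lin X ?P * dl Y ?e = 0"
    using qZW qXY rXY by simp
  have Pl: "lin l ?P = 0" using P0_on[OF lines(5)] .
  show ?thesis
  proof (cases "lin X ?P = 0")
    case True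
    hence "l = X" using par_point_eq[OF lines(5) lines(1) pX Pl] by blast
    hence "\<not> crosses l X Y" by (simp add: crosses_def)
    thus ?thesis using R True by simp
  next
    case linX: False
    show ?thesis
    proof (cases "dl Y ?e = 0")
      case True
      hence "parallel l Y" using dl_dir_par by blast
      hence "\<not> crosses l X Y" using pX by (simp add: crosses_def)
      thus ?thesis using R True by simp
    next
      case dY: False
      have nY: "\<not> parallel l Y" using dY dl_dir_par by blast
      have "l \<noteq> X" using linX Pl by auto
      moreover have "l \<noteq> Y" using nY by (metis par_refl)
      ultimately have c1: "crosses l X Y" using nY by (simp add: crosses_def)
      have "l \<noteq> Z" using nZ by (metis par_refl)
      moreover have "l \<noteq> W" using nW by (metis par_refl)
      ultimately have c2: "crosses l Z W" using nZ by (simp add: crosses_def)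
      have "mid X Y l = infpt l" using pX by (simp add: mid_def)
      moreover have "mid Z W l = Fin (midpt (meet l Z) (meet l W))" using nZ nW by (simp add: mid_def)
      ultimately have "mid X Y l \<noteq> mid Z W l" by (simp add: infpt_def)
      thus ?thesis using R c1 c2 linX dY by simp
    qed
  qed
qed

lemma bis_gen:
  fixes X Y Z W l :: "'a::field ln"
  assumes two: "(2::'a) \<noteq> 0" and lines: "is_line X" "is_line Y" "is_line Z" "is_line W" "is_line l"
    and nXZ: "\<not> parallel X Z" and nXW: "\<not> parallel X W"
    and nYZ: "\<not> parallel Y Z" and nYW: "\<not> parallel Y W"
  shows "(crosses l X Y \<and> crosses l Z W \<longrightarrow> mid X Y l = mid Z W l) \<longleftrightarrow>
         rr X Y (P0 l) (dir l) * qq Z W (dir l) = rr Z W (P0 l) (dir l) * qq X Y (dir l)"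
proof -
  let ?P = "P0 l" and ?e = "dir l"
  have nZX: "\<not> parallel Z X" using nXZ par_sym by blast
  have nZY: "\<not> parallel Z Y" using nYZ par_sym by blast
  have nWX: "\<not> parallel W X" using nXW par_sym by blast
  have nWY: "\<not> parallel W Y" using nYW par_sym by blast
  show ?thesis
  proof (cases "parallel l X")
    case True
    show ?thesis by (rule bis_S1[OF two lines nXZ nXW True])
  next
    case nX: False
    show ?thesis
    proof (cases "parallel l Y")
      case True
      have "(crosses l Y X \<and> crosses l Z W \<longrightarrow> mid Y X l = mid Z W l) \<longleftrightarrow>
         rr Y X ?P ?e * qq Z W ?e = rr Z W ?P ?e * qq Y X ?e"
        by (rule bis_S1[OF two lines(2,1,3,4,5) nYZ nYW True])
      thus ?thesis by (simp add: crosses_sym[of l Y X] mid_sym[of Y X] rr_sym[of Y X] qq_sym[of Y X])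
    next
      case nY: False
      show ?thesis
      proof (cases "parallel l Z")
        case True
        have "(crosses l Z W \<and> crosses l X Y \<longrightarrow> mid Z W l = mid X Y l) \<longleftrightarrow>
           rr Z W ?P ?e * qq X Y ?e = rr X Y ?P ?e * qq Z W ?e"
          by (rule bis_S1[OF two lines(3,4,1,2,5) nZX nZY True])
        thus ?thesis by auto
      next
        case nZ: False
        show ?thesis
        proof (cases "parallel l W")
          case True
          have "(crosses l W Z \<and> crosses l X Y \<longrightarrow> mid W Z l = mid X Y l) \<longleftrightarrow>
             rr W Z ?P ?e * qq X Y ?e = rr X Y ?P ?e * qq W Z ?e"
            by (rule bis_S1[OF two lines(4,3,1,2,5) nWX nWY True])
          thus ?thesis by (auto simp: crosses_sym[of l W Z] mid_sym[of W Z] rr_sym[of W Z] qq_sym[of W Z])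
        next
          case nW: False
          have dX: "dl X ?e \<noteq> 0" using nX dl_dir_par by blast
          have dY: "dl Y ?e \<noteq> 0" using nY dl_dir_par by blast
          have dZ: "dl Z ?e \<noteq> 0" using nZ dl_dir_par by blast
          have dW: "dl W ?e \<noteq> 0" using nW dl_dir_par by blast
          have c1: "crosses l X Y" using nX nY by (auto simp: crosses_def, metis par_refl, metis par_refl)
          have c2: "crosses l Z W" using nZ nW by (auto simp: crosses_def, metis par_refl, metis par_refl)
          have q1: "qq X Y ?e \<noteq> 0" using dX dY by (simp add: qq_def)
          have q2: "qq Z W ?e \<noteq> 0" using dZ dW by (simp add: qq_def)
          have "mid X Y l = mid Z W l \<longleftrightarrow>
                - rr X Y ?P ?e / (2 * qq X Y ?e) = - rr Z W ?P ?e / (2 * qq Z W ?e)"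
            by (simp add: mid_fin[OF two lines(5) nX nY] mid_fin[OF two lines(5) nZ nW]
                  pt_at_inj[OF dir_nz[OF lines(5)]])
          also have "\<dots> \<longleftrightarrow> rr X Y ?P ?e * qq Z W ?e = rr Z W ?P ?e * qq X Y ?e"
            using q1 q2 two by (simp add: field_simps)
          finally show ?thesis using c1 c2 by simp
        qed
      qed
    qed
  qed
qed

lemma bis_iff:
  fixes A B A' B' l :: "'a::field ln"
  assumes two: "(2::'a) \<noteq> 0" and Q: "is_quad A B A' B'" and l: "is_line l"
  shows "bisects A B A' B' l \<longleftrightarrow>
    rr A A' (P0 l) (dir l) * qq B B' (dir l) = rr B B' (P0 l) (dir l) * qq A A' (dir l)"
proof -
  have lines: "is_line A" "is_line B" "is_line A'" "is_line B'" using Q by (auto simp: is_quad_def)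
  have h: "\<not> parallel A B" "\<not> parallel B' A" "\<not> parallel B A'" "\<not> parallel A' B'"
    using Q by (auto simp: is_quad_def)
  have n: "\<not> parallel A B" "\<not> parallel A B'" "\<not> parallel A' B" "\<not> parallel A' B'"
    using h par_sym[of B' A] par_sym[of B A'] by auto
  show ?thesis unfolding bisects_def
    using bis_gen[OF two lines(1,3,2,4) l n] l by simp
qed

definition cp :: "'a::field ln \<Rightarrow> 'a ln \<Rightarrow> 'a" where "cp X Y = tL X * tL Y"
definition cr :: "'a::field ln \<Rightarrow> 'a ln \<Rightarrow> 'a" where "cr X Y = - (tL X * uL Y + uL X * tL Y)"
definition cs :: "'a::field ln \<Rightarrow> 'a ln \<Rightarrow> 'a" where "cs X Y = uL X * uL Y"
definition cw1 :: "'a::field ln \<Rightarrow> 'a ln \<Rightarrow> 'a" where "cw1 X Y = tL X * vL Y + vL X * tL Y"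
definition cw2 :: "'a::field ln \<Rightarrow> 'a ln \<Rightarrow> 'a" where "cw2 X Y = - (uL X * vL Y + vL X * uL Y)"
definition cc :: "'a::field ln \<Rightarrow> 'a ln \<Rightarrow> 'a" where "cc X Y = vL X * vL Y"

lemma prod_coef: "lin X p * lin Y p = cp X Y * (fst p)^2 + cr X Y * fst p * snd p + cs X Y * (snd p)^2
   + cw1 X Y * fst p + cw2 X Y * snd p + cc X Y"
  by (simp add: lin_def cp_def cr_def cs_def cw1_def cw2_def cc_def power2_eq_square algebra_simps)

lemma qq_coef: "qq X Y e = cp X Y * (fst e)^2 + cr X Y * fst e * snd e + cs X Y * (snd e)^2"
  by (simp add: qq_def dl_def cp_def cr_def cs_def power2_eq_square algebra_simps)

lemma rr_coef: "rr X Y P e = (2 * cp X Y * fst P + cr X Y * snd P + cw1 X Y) * fst e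
   + (cr X Y * fst P + 2 * cs X Y * snd P + cw2 X Y) * snd e"
  by (simp add: rr_def dl_def lin_def cp_def cr_def cs_def cw1_def cw2_def algebra_simps)

lemma CE:
  fixes p r s w1 w2 c0 :: "'a::field"
  assumes two: "(2::'a) \<noteq> 0" and H: "\<And>x y. p*x^2 + r*x*y + s*y^2 + w1*x + w2*y + c0 = 0"
  shows "p = 0 \<and> r = 0 \<and> s = 0 \<and> w1 = 0 \<and> w2 = 0 \<and> c0 = 0"
proof -
  have 1: "p = 0 \<and> w1 = 0 \<and> c0 = 0"
    using QZ[OF two, of p w1 c0] H[of _ 0] by simp
  have 2: "s = 0 \<and> w2 = 0"
    using QZ[OF two, of s w2 c0] H[of 0] by simp
  have "r = 0" using H[of 1 1] 1 2 by simp
  thus ?thesis using 1 2 by simp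
qed

lemma FI_coef:
  fixes A B A' B' l1 l2 :: "'a::field ln"
  assumes two: "(2::'a) \<noteq> 0"
    and FI: "\<forall>p. a*(lin A p * lin A' p) + b*(lin B p * lin B' p) + c = k*(lin l1 p * lin l2 p)"
  shows "a * cp A A' + b * cp B B' = k * cp l1 l2 \<and> a * cr A A' + b * cr B B' = k * cr l1 l2 \<and>
         a * cs A A' + b * cs B B' = k * cs l1 l2 \<and> a * cw1 A A' + b * cw1 B B' = k * cw1 l1 l2 \<and>
         a * cw2 A A' + b * cw2 B B' = k * cw2 l1 l2 \<and> a * cc A A' + b * cc B B' + c = k * cc l1 l2"
proof -
  have "\<And>x y. (a * cp A A' + b * cp B B' - k * cp l1 l2)*x^2 + (a * cr A A' + b * cr B B' - k * cr l1 l2)*x*y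
     + (a * cs A A' + b * cs B B' - k * cs l1 l2)*y^2 + (a * cw1 A A' + b * cw1 B B' - k * cw1 l1 l2)*x
     + (a * cw2 A A' + b * cw2 B B' - k * cw2 l1 l2)*y + (a * cc A A' + b * cc B B' + c - k * cc l1 l2) = 0"
  proof -
    fix x y
    have "a*(lin A (x,y) * lin A' (x,y)) + b*(lin B (x,y) * lin B' (x,y)) + c - k*(lin l1 (x,y) * lin l2 (x,y)) = 0"
      using FI by simp
    thus "(a * cp A A' + b * cp B B' - k * cp l1 l2)*x^2 + (a * cr A A' + b * cr B B' - k * cr l1 l2)*x*y
     + (a * cs A A' + b * cs B B' - k * cs l1 l2)*y^2 + (a * cw1 A A' + b * cw1 B B' - k * cw1 l1 l2)*x
     + (a * cw2 A A' + b * cw2 B B' - k * cw2 l1 l2)*y + (a * cc A A' + b * cc B B' + c - k * cc l1 l2) = 0"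
      by (simp only: prod_coef fst_conv snd_conv) (simp add: algebra_simps)
  qed
  from CE[OF two this] show ?thesis by simp
qed

lemma apol1: "qalpha A B A' B' * cp A A' + qbeta A B A' B' * cr A A' + qgamma A B A' B' * cs A A' = 0"
  by (simp add: qalpha_def qbeta_def qgamma_def cp_def cr_def cs_def algebra_simps)

lemma apol2: "qalpha A B A' B' * cp B B' + qbeta A B A' B' * cr B B' + qgamma A B A' B' * cs B B' = 0"
  by (simp add: qalpha_def qbeta_def qgamma_def cp_def cr_def cs_def algebra_simps)

lemma orth_expr: "qform A B A' B' (uL l1, tL l1) (uL l2, tL l2) =
   qalpha A B A' B' * cp l1 l2 + qbeta A B A' B' * cr l1 l2 + qgamma A B A' B' * cs l1 l2"
  by (simp add: qform_def cp_def cr_def cs_def algebra_simps)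

lemma cross3: "cr A A' * cs B B' - cs A A' * cr B B' = - qalpha A B A' B'
  \<and> cs A A' * cp B B' - cp A A' * cs B B' = - qbeta A B A' B'
  \<and> cp A A' * cr B B' - cr A A' * cp B B' = - qgamma A B A' B'"
  by (simp add: qalpha_def qbeta_def qgamma_def cp_def cr_def cs_def algebra_simps)

lemma FI_qq:
  fixes A B A' B' l1 l2 :: "'a::field ln"
  assumes two: "(2::'a) \<noteq> 0"
    and FI: "\<forall>p. a*(lin A p * lin A' p) + b*(lin B p * lin B' p) + c = k*(lin l1 p * lin l2 p)"
  shows "a*qq A A' e + b*qq B B' e = k*qq l1 l2 e"
proof -
  note h = FI_coef[OF two FI]
  have "a*qq A A' e + b*qq B B' e = (a*cp A A' + b*cp B B')*(fst e)^2 + (a*cr A A' + b*cr B B')*fst e*snd e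
      + (a*cs A A' + b*cs B B')*(snd e)^2" by (simp add: qq_coef algebra_simps)
  also have "\<dots> = (k*cp l1 l2)*(fst e)^2 + (k*cr l1 l2)*fst e*snd e + (k*cs l1 l2)*(snd e)^2"
    using h by simp
  also have "\<dots> = k*qq l1 l2 e" by (simp add: qq_coef algebra_simps)
  finally show ?thesis .
qed

lemma FI_rr:
  fixes A B A' B' l1 l2 :: "'a::field ln"
  assumes two: "(2::'a) \<noteq> 0"
    and FI: "\<forall>p. a*(lin A p * lin A' p) + b*(lin B p * lin B' p) + c = k*(lin l1 p * lin l2 p)"
  shows "a*rr A A' P e + b*rr B B' P e = k*rr l1 l2 P e"
proof -
  note h = FI_coef[OF two FI]
  have "a*rr A A' P e + b*rr B B' P e =
      (2 * (a*cp A A' + b*cp B B') * fst P + (a*cr A A' + b*cr B B') * snd P + (a*cw1 A A' + b*cw1 B B')) * fst e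
   + ((a*cr A A' + b*cr B B') * fst P + 2 * (a*cs A A' + b*cs B B') * snd P + (a*cw2 A A' + b*cw2 B B')) * snd e"
    by (simp add: rr_coef algebra_simps)
  also have "\<dots> = (2 * (k*cp l1 l2) * fst P + (k*cr l1 l2) * snd P + (k*cw1 l1 l2)) * fst e
   + ((k*cr l1 l2) * fst P + 2 * (k*cs l1 l2) * snd P + (k*cw2 l1 l2)) * snd e"
    using h by simp
  also have "\<dots> = k*rr l1 l2 P e" by (simp add: rr_coef algebra_simps)
  finally show ?thesis .
qed

lemma DET0:
  fixes a b X1 X2 Y1 Y2 :: "'a::field"
  assumes ab: "a \<noteq> 0 \<or> b \<noteq> 0" and h1: "a*X1 + b*X2 = 0" and h2: "a*Y1 + b*Y2 = 0"
  shows "Y1 * X2 = Y2 * X1"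
proof -
  have "a * (Y1 * X2 - Y2 * X1) = (a*Y1) * X2 - Y2 * (a*X1)" by (simp add: algebra_simps)
  also have "\<dots> = (- (b*Y2)) * X2 - Y2 * (- (b*X2))" using h1 h2
    by (metis add.commute add_eq_0_iff)
  also have "\<dots> = 0" by (simp add: algebra_simps)
  finally have 1: "a * (Y1 * X2 - Y2 * X1) = 0" .
  have "b * (Y1 * X2 - Y2 * X1) = Y1 * (b*X2) - (b*Y2) * X1" by (simp add: algebra_simps)
  also have "\<dots> = Y1 * (- (a*X1)) - (- (a*Y1)) * X1" using h1 h2
    by (metis add_eq_0_iff)
  also have "\<dots> = 0" by (simp add: algebra_simps)
  finally have 2: "b * (Y1 * X2 - Y2 * X1) = 0" .
  show ?thesis using 1 2 ab by auto
qed

lemma FI_bis1: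
  fixes A B A' B' l1 l2 :: "'a::field ln"
  assumes two: "(2::'a) \<noteq> 0" and Q: "is_quad A B A' B'" and l1: "is_line l1"
    and ab: "a \<noteq> 0 \<or> b \<noteq> 0"
    and FI: "\<forall>p. a*(lin A p * lin A' p) + b*(lin B p * lin B' p) + c = k*(lin l1 p * lin l2 p)"
  shows "bisects A B A' B' l1"
proof -
  let ?P = "P0 l1" and ?e = "dir l1"
  have "qq l1 l2 ?e = 0" by (simp add: qq_def dl_dir_self)
  hence q: "a*qq A A' ?e + b*qq B B' ?e = 0" using FI_qq[OF two FI, of ?e] by simp
  have "rr l1 l2 ?P ?e = 0" by (simp add: rr_def dl_dir_self P0_on[OF l1])
  hence r: "a*rr A A' ?P ?e + b*rr B B' ?P ?e = 0" using FI_rr[OF two FI, of ?P ?e] by simp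
  show ?thesis using bis_iff[OF two Q l1] DET0[OF ab q r] by simp
qed

lemma sum_s:
  fixes M N :: "'a::field ln"
  assumes "dl M e \<noteq> 0" "dl N e \<noteq> 0"
  shows "(- lin M P / dl M e) + (- lin N P / dl N e) = - rr M N P e / qq M N e"
  using assms by (simp add: rr_def qq_def field_simps)

lemma HL:
  fixes X Z W l1 l2 :: "'a::field ln"
  assumes two: "(2::'a) \<noteq> 0" and X: "is_line X"
    and nZ: "\<not> parallel X Z" and nW: "\<not> parallel X W" and n1: "\<not> parallel X l1" and n2: "\<not> parallel X l2"
    and k: "k \<noteq> 0"
    and H: "\<And>s. b*(lin Z (pt_at (P0 X) (dir X) s) * lin W (pt_at (P0 X) (dir X) s)) + c
              = k*(lin l1 (pt_at (P0 X) (dir X) s) * lin l2 (pt_at (P0 X) (dir X) s))"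
  shows "midpt (meet X Z) (meet X W) = midpt (meet X l1) (meet X l2)"
proof -
  let ?P = "P0 X" and ?e = "dir X"
  have dZ: "dl Z ?e \<noteq> 0" using nZ dl_dir_par by blast
  have dW: "dl W ?e \<noteq> 0" using nW dl_dir_par by blast
  have d1: "dl l1 ?e \<noteq> 0" using n1 dl_dir_par by blast
  have d2: "dl l2 ?e \<noteq> 0" using n2 dl_dir_par by blast
  have "\<And>s. (b * qq Z W ?e - k * qq l1 l2 ?e) * s^2 + (b * rr Z W ?P ?e - k * rr l1 l2 ?P ?e) * s
     + (b * (lin Z ?P * lin W ?P) + c - k * (lin l1 ?P * lin l2 ?P)) = 0"
  proof -
    fix s
    have "b*(lin Z (pt_at ?P ?e s) * lin W (pt_at ?P ?e s)) + c - k*(lin l1 (pt_at ?P ?e s) * lin l2 (pt_at ?P ?e s)) = 0"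
      using H[of s] by simp
    thus "(b * qq Z W ?e - k * qq l1 l2 ?e) * s^2 + (b * rr Z W ?P ?e - k * rr l1 l2 ?P ?e) * s
     + (b * (lin Z ?P * lin W ?P) + c - k * (lin l1 ?P * lin l2 ?P)) = 0"
      by (simp only: prod_pt_at) (simp add: algebra_simps)
  qed
  from QZ[OF two this] have e1: "b * qq Z W ?e = k * qq l1 l2 ?e" and e2: "b * rr Z W ?P ?e = k * rr l1 l2 ?P ?e"
    by auto
  have q12: "qq l1 l2 ?e \<noteq> 0" using d1 d2 by (simp add: qq_def)
  have qZW: "qq Z W ?e \<noteq> 0" using dZ dW by (simp add: qq_def)
  have b: "b \<noteq> 0" using e1 q12 k by auto
  have "- rr Z W ?P ?e / qq Z W ?e = - (b * rr Z W ?P ?e) / (b * qq Z W ?e)" using b by simp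
  also have "\<dots> = - rr l1 l2 ?P ?e / qq l1 l2 ?e" using e1 e2 k by simp
  finally have S: "(- lin Z ?P / dl Z ?e) + (- lin W ?P / dl W ?e) = (- lin l1 ?P / dl l1 ?e) + (- lin l2 ?P / dl l2 ?e)"
    using sum_s[OF dZ dW] sum_s[OF d1 d2] by simp
  show ?thesis
    by (simp only: meet_param[OF X nZ] meet_param[OF X nW] meet_param[OF X n1] meet_param[OF X n2]
        midpt_pt_at[OF two] S)
qed


lemma avg_alg:
  fixes xZ xW x1 x2 yZ yW y1 y2 :: "'a::field"
  assumes two: "(2::'a) \<noteq> 0" and h1: "(xZ + xW) / 2 = (x1 + x2) / 2" and h2: "(yZ + yW) / 2 = (y1 + y2) / 2"
  shows "((x1 + y1) / 2 + (x2 + y2) / 2) / 2 = (xZ + yZ + yW + xW) / 4"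
proof -
  have a: "xZ + xW = x1 + x2" using h1 two by (metis divide_cancel_right)
  have b: "yZ + yW = y1 + y2" using h2 two by (metis divide_cancel_right)
  have "(xZ + yZ + yW + xW) / 4 = ((xZ + xW) + (yZ + yW)) / (2*2)" by (simp add: algebra_simps)
  also have "\<dots> = ((x1 + x2) + (y1 + y2)) / (2*2)" using a b by simp
  also have "\<dots> = (((x1 + y1) + (x2 + y2)) / 2) / 2" by (simp add: divide_divide_eq_left algebra_simps)
  also have "\<dots> = ((x1 + y1) / 2 + (x2 + y2) / 2) / 2" by (simp add: add_divide_distrib)
  finally show ?thesis by (rule sym)
qed

lemma ANTI_gen:
  fixes X Y Z W l1 l2 :: "'a::field ln"
  assumes two: "(2::'a) \<noteq> 0" and X: "is_line X" and Y: "is_line Y"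
    and nXZ: "\<not> parallel X Z" and nXW: "\<not> parallel X W" and nYZ: "\<not> parallel Y Z" and nYW: "\<not> parallel Y W"
    and n1X: "\<not> parallel l1 X" and n1Y: "\<not> parallel l1 Y" and n2X: "\<not> parallel l2 X" and n2Y: "\<not> parallel l2 Y"
    and k: "k \<noteq> 0"
    and FI: "\<forall>p. a*(lin X p * lin Y p) + b*(lin Z p * lin W p) + c = k*(lin l1 p * lin l2 p)"
  shows "midpt (midpt (meet l1 X) (meet l1 Y)) (midpt (meet l2 X) (meet l2 Y)) = centroid X Z Y W"
proof -
  have n1X': "\<not> parallel X l1" using n1X par_sym by blast
  have n2X': "\<not> parallel X l2" using n2X par_sym by blast
  have n1Y': "\<not> parallel Y l1" using n1Y par_sym by blast
  have n2Y': "\<not> parallel Y l2" using n2Y par_sym by blast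
  have hX: "midpt (meet X Z) (meet X W) = midpt (meet X l1) (meet X l2)"
  proof (rule HL[OF two X nXZ nXW n1X' n2X' k])
    fix s
    have "lin X (pt_at (P0 X) (dir X) s) = 0" by (simp add: lin_pt_at P0_on[OF X] dl_dir_self)
    thus "b*(lin Z (pt_at (P0 X) (dir X) s) * lin W (pt_at (P0 X) (dir X) s)) + c
              = k*(lin l1 (pt_at (P0 X) (dir X) s) * lin l2 (pt_at (P0 X) (dir X) s))"
      using FI[rule_format, of "pt_at (P0 X) (dir X) s"] by simp
  qed
  have hY: "midpt (meet Y Z) (meet Y W) = midpt (meet Y l1) (meet Y l2)"
  proof (rule HL[OF two Y nYZ nYW n1Y' n2Y' k])
    fix s
    have "lin Y (pt_at (P0 Y) (dir Y) s) = 0" by (simp add: lin_pt_at P0_on[OF Y] dl_dir_self)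
    thus "b*(lin Z (pt_at (P0 Y) (dir Y) s) * lin W (pt_at (P0 Y) (dir Y) s)) + c
              = k*(lin l1 (pt_at (P0 Y) (dir Y) s) * lin l2 (pt_at (P0 Y) (dir Y) s))"
      using FI[rule_format, of "pt_at (P0 Y) (dir Y) s"] by simp
  qed
  have hx1: "(fst (meet X Z) + fst (meet X W)) / 2 = (fst (meet X l1) + fst (meet X l2)) / 2"
    using arg_cong[OF hX, of fst] by (simp add: midpt_def)
  have hx2: "(snd (meet X Z) + snd (meet X W)) / 2 = (snd (meet X l1) + snd (meet X l2)) / 2"
    using arg_cong[OF hX, of snd] by (simp add: midpt_def)
  have hy1: "(fst (meet Y Z) + fst (meet Y W)) / 2 = (fst (meet Y l1) + fst (meet Y l2)) / 2"
    using arg_cong[OF hY, of fst] by (simp add: midpt_def)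
  have hy2: "(snd (meet Y Z) + snd (meet Y W)) / 2 = (snd (meet Y l1) + snd (meet Y l2)) / 2"
    using arg_cong[OF hY, of snd] by (simp add: midpt_def)
  have c: "centroid X Z Y W = ((fst (meet X Z) + fst (meet Y Z) + fst (meet Y W) + fst (meet X W)) / 4,
                             (snd (meet X Z) + snd (meet Y Z) + snd (meet Y W) + snd (meet X W)) / 4)"
    by (simp add: centroid_def Let_def meet_commute[of Z Y] meet_commute[of W X])
  show ?thesis
    unfolding c
    using avg_alg[OF two hx1 hy1] avg_alg[OF two hx2 hy2]
    by (simp add: midpt_def meet_commute[of l1 X] meet_commute[of l1 Y] meet_commute[of l2 X] meet_commute[of l2 Y])
qed

lemma centroid_swap: "centroid B A B' A' = centroid A B A' B'"
  by (simp add: centroid_def Let_def meet_commute[of B A] meet_commute[of A B'] meet_commute[of B' A']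
      meet_commute[of A' B] algebra_simps)

lemma FI_qpair:
  fixes A B A' B' l1 l2 :: "'a::field ln"
  assumes two: "(2::'a) \<noteq> 0" and Q: "is_quad A B A' B'" and l1: "is_line l1" and l2: "is_line l2"
    and ab: "a \<noteq> 0 \<or> b \<noteq> 0" and k: "k \<noteq> 0"
    and FI: "\<forall>p. a*(lin A p * lin A' p) + b*(lin B p * lin B' p) + c = k*(lin l1 p * lin l2 p)"
  shows "q_pair A B A' B' l1 l2"
proof -
  have lines: "is_line A" "is_line B" "is_line A'" "is_line B'" using Q by (auto simp: is_quad_def)
  have h: "\<not> parallel A B" "\<not> parallel B' A" "\<not> parallel B A'" "\<not> parallel A' B'"
    using Q by (auto simp: is_quad_def)
  have n: "\<not> parallel A B" "\<not> parallel A B'" "\<not> parallel A' B" "\<not> parallel A' B'"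
    "\<not> parallel B A" "\<not> parallel B' A" "\<not> parallel B A'" "\<not> parallel B' A'"
    using h par_sym[of B' A] par_sym[of B A'] par_sym[of A B] par_sym[of A' B'] by auto
  have FI2: "\<forall>p. a*(lin A p * lin A' p) + b*(lin B p * lin B' p) + c = k*(lin l2 p * lin l1 p)"
    using FI by (simp add: mult.commute)
  have bis1: "bisects A B A' B' l1" by (rule FI_bis1[OF two Q l1 ab FI])
  have bis2: "bisects A B A' B' l2" by (rule FI_bis1[OF two Q l2 ab FI2])
  note co = FI_coef[OF two FI]
  have "k * qform A B A' B' (uL l1, tL l1) (uL l2, tL l2) =
     qalpha A B A' B' * (k * cp l1 l2) + qbeta A B A' B' * (k * cr l1 l2) + qgamma A B A' B' * (k * cs l1 l2)"
    by (simp add: orth_expr algebra_simps)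
  also have "\<dots> = qalpha A B A' B' * (a * cp A A' + b * cp B B') + qbeta A B A' B' * (a * cr A A' + b * cr B B')
      + qgamma A B A' B' * (a * cs A A' + b * cs B B')" using co by simp
  also have "\<dots> = a * (qalpha A B A' B' * cp A A' + qbeta A B A' B' * cr A A' + qgamma A B A' B' * cs A A')
      + b * (qalpha A B A' B' * cp B B' + qbeta A B A' B' * cr B B' + qgamma A B A' B' * cs B B')"
    by (simp add: algebra_simps)
  also have "\<dots> = 0" by (simp add: apol1 apol2)
  finally have orth: "q_orth A B A' B' l1 l2" using k by (simp add: q_orth_def)
  have zb: "b = 0" if "qq l1 l2 (dir X) = 0" "qq A A' (dir X) = 0" "qq B B' (dir X) \<noteq> 0" for X
    using FI_qq[OF two FI, of "dir X"] that by simp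
  have za: "a = 0" if "qq l1 l2 (dir X) = 0" "qq A A' (dir X) \<noteq> 0" "qq B B' (dir X) = 0" for X
    using FI_qq[OF two FI, of "dir X"] that by simp
  have q12: "qq l1 l2 (dir X) = 0" if "parallel l1 X \<or> parallel l2 X" for X
    using that dl_dir_par[of l1 X] dl_dir_par[of l2 X] par_sym[of l1 X] par_sym[of l2 X]
    by (auto simp: qq_def)
  have dd: "dl M (dir X) \<noteq> 0" if "\<not> parallel X M" for X M
    using that dl_dir_par by blast
  have qA: "qq A A' (dir A) = 0" "qq A A' (dir A') = 0" "qq B B' (dir B) = 0" "qq B B' (dir B') = 0"
    by (simp_all add: qq_def dl_dir_self)
  have qB: "qq B B' (dir A) \<noteq> 0" "qq B B' (dir A') \<noteq> 0" "qq A A' (dir B) \<noteq> 0" "qq A A' (dir B') \<noteq> 0"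
    using dd[OF n(1)] dd[OF n(2)] dd[OF n(3)] dd[OF n(4)] dd[OF n(5)] dd[OF n(6)] dd[OF n(7)] dd[OF n(8)]
    by (simp_all add: qq_def)
  have anti: "antipodal A B A' B' l1 l2"
  proof (cases "\<not> parallel l1 A \<and> \<not> parallel l1 A' \<and> \<not> parallel l2 A \<and> \<not> parallel l2 A'")
    case True
    have c1: "crosses l1 A A'" using True by (auto simp: crosses_def, metis par_refl, metis par_refl)
    have c2: "crosses l2 A A'" using True by (auto simp: crosses_def, metis par_refl, metis par_refl)
    have m1: "bis_mid A B A' B' l1 = Fin (midpt (meet l1 A) (meet l1 A'))"
      using c1 True by (simp add: bis_mid_def mid_def)
    have m2: "bis_mid A B A' B' l2 = Fin (midpt (meet l2 A) (meet l2 A'))"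
      using c2 True by (simp add: bis_mid_def mid_def)
    have "midpt (midpt (meet l1 A) (meet l1 A')) (midpt (meet l2 A) (meet l2 A')) = centroid A B A' B'"
      using True by (intro ANTI_gen[OF two lines(1) lines(3) n(1) n(2) n(3) n(4) _ _ _ _ k FI]) auto
    thus ?thesis using m1 m2 by (auto simp: antipodal_def)
  next
    case nA: False
    show ?thesis
    proof (cases "\<not> parallel l1 B \<and> \<not> parallel l1 B' \<and> \<not> parallel l2 B \<and> \<not> parallel l2 B'")
      case True
      have c1: "crosses l1 B B'" using True by (auto simp: crosses_def, metis par_refl, metis par_refl)
      have c2: "crosses l2 B B'" using True by (auto simp: crosses_def, metis par_refl, metis par_refl)
      have m1: "bis_mid A B A' B' l1 = Fin (midpt (meet l1 B) (meet l1 B'))"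
        using c1 True bis1 by (auto simp: bis_mid_def bisects_def mid_def)
      have m2: "bis_mid A B A' B' l2 = Fin (midpt (meet l2 B) (meet l2 B'))"
        using c2 True bis2 by (auto simp: bis_mid_def bisects_def mid_def)
      have FI3: "\<forall>p. b*(lin B p * lin B' p) + a*(lin A p * lin A' p) + c = k*(lin l1 p * lin l2 p)"
        using FI by (simp add: algebra_simps)
      have "midpt (midpt (meet l1 B) (meet l1 B')) (midpt (meet l2 B) (meet l2 B')) = centroid B A B' A'"
        using True by (intro ANTI_gen[OF two lines(2) lines(4) n(5) n(7) n(6) n(8) _ _ _ _ k FI3]) auto
      thus ?thesis using m1 m2 centroid_swap[of B A B' A'] by (auto simp: antipodal_def)
    next
      case nB: False
      have b1: "parallel l1 A \<or> parallel l2 A \<Longrightarrow> b = 0" using zb[of A] q12[of A] qA(1) qB(1) by blast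
      have b2: "parallel l1 A' \<or> parallel l2 A' \<Longrightarrow> b = 0" using zb[of A'] q12[of A'] qA(2) qB(2) by blast
      have a1: "parallel l1 B \<or> parallel l2 B \<Longrightarrow> a = 0" using za[of B] q12[of B] qA(3) qB(3) by blast
      have a2: "parallel l1 B' \<or> parallel l2 B' \<Longrightarrow> a = 0" using za[of B'] q12[of B'] qA(4) qB(4) by blast
      have "b = 0" using nA b1 b2 by blast
      moreover have "a = 0" using nB a1 a2 by blast
      ultimately show ?thesis using ab by simp
    qed
  qed
  show ?thesis using bis1 bis2 anti orth by (simp add: q_pair_def)
qed

lemma lcd:
  fixes m N1 N2 x y c :: "'a::field"
  assumes "m \<noteq> 0" "N1*x + N2*y = c*m"
  shows "(N1/m)*x + (N2/m)*y = c"
proof -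
  have "(N1/m)*x + (N2/m)*y = (N1*x + N2*y)/m" by (simp add: add_divide_distrib)
  also have "\<dots> = c" using assms by simp
  finally show ?thesis .
qed

lemma LA3:
  fixes p1 r1 s1 p2 r2 s2 p r s :: "'a::field"
  assumes det: "p*(r1*s2 - s1*r2) + r*(s1*p2 - p1*s2) + s*(p1*r2 - r1*p2) = 0"
    and ind: "\<And>a b. a*p1 + b*p2 = 0 \<Longrightarrow> a*r1 + b*r2 = 0 \<Longrightarrow> a*s1 + b*s2 = 0 \<Longrightarrow> a = 0 \<and> b = 0"
  shows "\<exists>a b. a*p1 + b*p2 = p \<and> a*r1 + b*r2 = r \<and> a*s1 + b*s2 = s"
proof -
  let ?m1 = "r1*s2 - s1*r2" and ?m2 = "s1*p2 - p1*s2" and ?m3 = "p1*r2 - r1*p2"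
  show ?thesis
  proof (cases "?m3 \<noteq> 0")
    case True
    let ?a = "(p*r2 - r*p2)/?m3" and ?b = "(p1*r - r1*p)/?m3"
    have "?a*p1 + ?b*p2 = p" by (rule lcd[OF True]) algebra
    moreover have "?a*r1 + ?b*r2 = r" by (rule lcd[OF True]) algebra
    moreover have "?a*s1 + ?b*s2 = s" by (rule lcd[OF True]) (use det in algebra)
    ultimately show ?thesis by blast
  next
    case F3: False
    show ?thesis
    proof (cases "?m1 \<noteq> 0")
      case True
      let ?a = "(r*s2 - s*r2)/?m1" and ?b = "(r1*s - s1*r)/?m1"
      have "?a*r1 + ?b*r2 = r" by (rule lcd[OF True]) algebra
      moreover have "?a*s1 + ?b*s2 = s" by (rule lcd[OF True]) algebra
      moreover have "?a*p1 + ?b*p2 = p" by (rule lcd[OF True]) (use det in algebra)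
      ultimately show ?thesis by blast
    next
      case F1: False
      show ?thesis
      proof (cases "?m2 \<noteq> 0")
        case True
        let ?a = "(s*p2 - p*s2)/?m2" and ?b = "(s1*p - p1*s)/?m2"
        have "?a*s1 + ?b*s2 = s" by (rule lcd[OF True]) algebra
        moreover have "?a*p1 + ?b*p2 = p" by (rule lcd[OF True]) algebra
        moreover have "?a*r1 + ?b*r2 = r" by (rule lcd[OF True]) (use det in algebra)
        ultimately show ?thesis by blast
      next
        case F2: False
        have m1: "r1*s2 = s1*r2" and m2: "s1*p2 = p1*s2" and m3: "p1*r2 = r1*p2" using F1 F2 F3 by auto
        have False
        proof (cases "p1 = 0 \<and> r1 = 0 \<and> s1 = 0")
          case True
          thus False using ind[of 1 0] by simp
        next
          case nz: False
          show False
          proof (cases "p1 \<noteq> 0")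
            case True
            have e1: "p2*p1 + (-p1)*p2 = 0" by (simp add: algebra_simps)
              have e2: "p2*r1 + (-p1)*r2 = 0"
              proof -
                have "p2*r1 + (-p1)*r2 = r1*p2 - p1*r2" by (simp add: algebra_simps)
                thus ?thesis using m3 by simp
              qed
              have e3: "p2*s1 + (-p1)*s2 = 0"
              proof -
                have "p2*s1 + (-p1)*s2 = s1*p2 - p1*s2" by (simp add: algebra_simps)
                thus ?thesis using m2 by simp
              qed
              have "-p1 = 0" using ind[OF e1 e2 e3] by simp
              thus False using True by simp
          next
            case np: False
            show False
            proof (cases "r1 \<noteq> 0")
              case True
              have e1: "r2*p1 + (-r1)*p2 = 0"
              proof -
                have "r2*p1 + (-r1)*p2 = p1*r2 - r1*p2" by (simp add: algebra_simps)
                thus ?thesis using m3 by simp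
              qed
              have e2: "r2*r1 + (-r1)*r2 = 0" by (simp add: algebra_simps)
              have e3: "r2*s1 + (-r1)*s2 = 0"
              proof -
                have "r2*s1 + (-r1)*s2 = s1*r2 - r1*s2" by (simp add: algebra_simps)
                thus ?thesis using m1 by simp
              qed
              have "-r1 = 0" using ind[OF e1 e2 e3] by simp
              thus False using True by simp
            next
              case False
              hence s: "s1 \<noteq> 0" using np nz by blast
              have e1: "s2*p1 + (-s1)*p2 = 0"
              proof -
                have "s2*p1 + (-s1)*p2 = p1*s2 - s1*p2" by (simp add: algebra_simps)
                thus ?thesis using m2 by simp
              qed
              have e2: "s2*r1 + (-s1)*r2 = 0"
              proof -
                have "s2*r1 + (-s1)*r2 = r1*s2 - s1*r2" by (simp add: algebra_simps)
                thus ?thesis using m1 by simp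
              qed
              have e3: "s2*s1 + (-s1)*s2 = 0" by (simp add: algebra_simps)
              have "-s1 = 0" using ind[OF e1 e2 e3] by simp
              thus False using s by simp
            qed
          qed
        qed
        thus ?thesis ..
      qed
    qed
  qed
qed

lemma IND:
  fixes A B A' B' :: "'a::field ln"
  assumes Q: "is_quad A B A' B'"
    and h1: "a * cp A A' + b * cp B B' = 0" and h2: "a * cr A A' + b * cr B B' = 0"
    and h3: "a * cs A A' + b * cs B B' = 0"
  shows "a = 0 \<and> b = 0"
proof -
  have h: "\<not> parallel A B" "\<not> parallel B' A" "\<not> parallel B A'" "\<not> parallel A' B'"
    using Q by (auto simp: is_quad_def)
  have n: "\<not> parallel A B" "\<not> parallel A B'" "\<not> parallel B A"
    using h par_sym[of B' A] par_sym[of A B] by auto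
  have z: "a * qq A A' e + b * qq B B' e = 0" for e
  proof -
    have "a * qq A A' e + b * qq B B' e = (a * cp A A' + b * cp B B') * (fst e)^2
      + (a * cr A A' + b * cr B B') * fst e * snd e + (a * cs A A' + b * cs B B') * (snd e)^2"
      by (simp add: qq_coef algebra_simps)
    thus ?thesis using h1 h2 h3 by simp
  qed
  have "qq A A' (dir A) = 0" "qq B B' (dir B) = 0" by (simp_all add: qq_def dl_dir_self)
  moreover have "qq B B' (dir A) \<noteq> 0"
    using n(1,2) dl_dir_par[of B A] dl_dir_par[of B' A] by (simp add: qq_def)
  moreover have "qq A A' (dir B) \<noteq> 0"
    using n(3) h(3) dl_dir_par[of A B] dl_dir_par[of A' B] by (simp add: qq_def)
  ultimately show ?thesis using z[of "dir A"] z[of "dir B"] by simp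
qed

lemma c12_nz: "is_line l1 \<Longrightarrow> is_line l2 \<Longrightarrow> cp l1 l2 \<noteq> 0 \<or> cr l1 l2 \<noteq> 0 \<or> cs l1 l2 \<noteq> 0"
  by (auto simp: is_line_def cp_def cr_def cs_def)

lemma DET1:
  fixes a b X1 X2 Y1 Y2 :: "'a::field"
  assumes d: "Y1 * X2 = Y2 * X1" and h: "a*X1 + b*X2 = 0" and nz: "X1 \<noteq> 0 \<or> X2 \<noteq> 0"
  shows "a*Y1 + b*Y2 = 0"
proof (cases "X1 \<noteq> 0")
  case True
  have "X1 * (a*Y1 + b*Y2) = (a*X1)*Y1 + b*(Y2*X1)" by (simp add: algebra_simps)
  also have "\<dots> = (- (b*X2))*Y1 + b*(Y1*X2)" using h d by (metis add_eq_0_iff add.commute)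
  also have "\<dots> = 0" by (simp add: algebra_simps)
  finally show ?thesis using True by simp
next
  case False
  hence X2: "X2 \<noteq> 0" using nz by simp
  have "X2 * (a*Y1 + b*Y2) = a*(Y1*X2) + (b*X2)*Y2" by (simp add: algebra_simps)
  also have "\<dots> = a*(Y2*X1) + (- (a*X1))*Y2" using h d by (metis add_eq_0_iff)
  also have "\<dots> = 0" by (simp add: algebra_simps)
  finally show ?thesis using X2 by simp
qed

lemma qq_nz:
  fixes A B A' B' l :: "'a::field ln"
  assumes Q: "is_quad A B A' B'" and l: "is_line l"
  shows "qq A A' (dir l) \<noteq> 0 \<or> qq B B' (dir l) \<noteq> 0"
proof (rule ccontr)
  assume "\<not> ?thesis"
  hence z: "qq A A' (dir l) = 0" "qq B B' (dir l) = 0" by auto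
  have lines: "is_line A" "is_line B" "is_line A'" "is_line B'" using Q by (auto simp: is_quad_def)
  have h: "\<not> parallel A B" "\<not> parallel B' A" "\<not> parallel B A'" "\<not> parallel A' B'"
    using Q by (auto simp: is_quad_def)
  have n: "\<not> parallel A B" "\<not> parallel A B'" "\<not> parallel A' B" "\<not> parallel A' B'"
    using h par_sym[of B' A] par_sym[of B A'] by auto
  have pa: "parallel l A \<or> parallel l A'" using z(1) dl_dir_par[of A l] dl_dir_par[of A' l] by (auto simp: qq_def)
  have pb: "parallel l B \<or> parallel l B'" using z(2) dl_dir_par[of B l] dl_dir_par[of B' l] by (auto simp: qq_def)
  show False using pa pb n par_trans[OF l lines(1) lines(2)] par_trans[OF l lines(1) lines(4)]
    par_trans[OF l lines(3) lines(2)] par_trans[OF l lines(3) lines(4)] by blast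
qed

lemma mid_on:
  fixes X Y l :: "'a::field ln"
  assumes two: "(2::'a) \<noteq> 0" and l: "is_line l" and m: "mid X Y l = Fin p"
  shows "lin l p = 0"
proof -
  have nX: "\<not> parallel l X" and nY: "\<not> parallel l Y" using m by (auto simp: mid_def infpt_def split: if_splits)
  have "p = midpt (meet l X) (meet l Y)" using m nX nY by (simp add: mid_def)
  hence "2 * lin l p = lin l (meet l X) + lin l (meet l Y)" using lin_midpt2[OF two] by simp
  also have "\<dots> = 0" using meet_on[OF l nX] meet_on[OF l nY] by simp
  finally show ?thesis using two by simp
qed

lemma bis_mid_on:
  fixes A B A' B' l :: "'a::field ln"
  assumes two: "(2::'a) \<noteq> 0" and l: "is_line l" and m: "bis_mid A B A' B' l = Fin p"
  shows "lin l p = 0"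
  using m mid_on[OF two l] by (auto simp: bis_mid_def split: if_splits)

lemma QP_FI:
  fixes A B A' B' l1 l2 :: "'a::field ln"
  assumes two: "(2::'a) \<noteq> 0" and Q: "is_quad A B A' B'" and l1: "is_line l1" and l2: "is_line l2"
    and qp: "q_pair A B A' B' l1 l2"
  shows "\<exists>a b c. (a \<noteq> 0 \<or> b \<noteq> 0) \<and>
     (\<forall>p. a*(lin A p * lin A' p) + b*(lin B p * lin B' p) + c = 1*(lin l1 p * lin l2 p))"
proof -
  have orth: "q_orth A B A' B' l1 l2" and bis1: "bisects A B A' B' l1" and bis2: "bisects A B A' B' l2"
    and anti: "antipodal A B A' B' l1 l2" using qp by (auto simp: q_pair_def)
  have det: "cp l1 l2 * (cr A A' * cs B B' - cs A A' * cr B B') + cr l1 l2 * (cs A A' * cp B B' - cp A A' * cs B B')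
     + cs l1 l2 * (cp A A' * cr B B' - cr A A' * cp B B') = 0"
  proof -
    have "cp l1 l2 * (cr A A' * cs B B' - cs A A' * cr B B') + cr l1 l2 * (cs A A' * cp B B' - cp A A' * cs B B')
     + cs l1 l2 * (cp A A' * cr B B' - cr A A' * cp B B') = - qform A B A' B' (uL l1, tL l1) (uL l2, tL l2)"
    proof -
      have m1: "cr A A' * cs B B' - cs A A' * cr B B' = - qalpha A B A' B'"
        and m2: "cs A A' * cp B B' - cp A A' * cs B B' = - qbeta A B A' B'"
        and m3: "cp A A' * cr B B' - cr A A' * cp B B' = - qgamma A B A' B'"
        using cross3[of A A' B B'] by auto
      show ?thesis by (simp only: m1 m2 m3 orth_expr) (simp add: algebra_simps)
    qed
    thus ?thesis using orth by (simp add: q_orth_def)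
  qed
  obtain a b where ca: "a*cp A A' + b*cp B B' = cp l1 l2" and cb: "a*cr A A' + b*cr B B' = cr l1 l2"
      and cc': "a*cs A A' + b*cs B B' = cs l1 l2"
    using LA3[OF det IND[OF Q]] by blast
  have ab: "a \<noteq> 0 \<or> b \<noteq> 0" using c12_nz[OF l1 l2] ca cb cc' by auto
  have hq: "a*qq A A' e + b*qq B B' e = qq l1 l2 e" for e
  proof -
    have "a*qq A A' e + b*qq B B' e = (a*cp A A' + b*cp B B')*(fst e)^2 + (a*cr A A' + b*cr B B')*fst e*snd e
      + (a*cs A A' + b*cs B B')*(snd e)^2" by (simp add: qq_coef algebra_simps)
    also have "\<dots> = qq l1 l2 e" using ca cb cc' by (simp add: qq_coef)
    finally show ?thesis .
  qed
  define w1 where "w1 = a*cw1 A A' + b*cw1 B B' - cw1 l1 l2"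
  define w2 where "w2 = a*cw2 A A' + b*cw2 B B' - cw2 l1 l2"
  define w0 where "w0 = a*cc A A' + b*cc B B' - cc l1 l2"
  have hform: "a*(lin A p * lin A' p) + b*(lin B p * lin B' p) - lin l1 p * lin l2 p = w1 * fst p + w2 * snd p + w0" for p
  proof -
    have "a*(lin A p * lin A' p) + b*(lin B p * lin B' p) - lin l1 p * lin l2 p =
      (a*cp A A' + b*cp B B' - cp l1 l2) * (fst p)^2 + (a*cr A A' + b*cr B B' - cr l1 l2) * fst p * snd p
      + (a*cs A A' + b*cs B B' - cs l1 l2) * (snd p)^2 + w1 * fst p + w2 * snd p + w0"
      by (simp only: prod_coef w1_def w2_def w0_def) (simp add: algebra_simps)
    thus ?thesis using ca cb cc' by simp
  qed
  have wl: "w1 * uL l + w2 * tL l = 0" if ll: "l = l1 \<or> l = l2" for l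
  proof -
    let ?P = "P0 l" and ?e = "dir l"
    have l: "is_line l" using ll l1 l2 by auto
    have bis: "bisects A B A' B' l" using ll bis1 bis2 by auto
    have z: "lin l1 p * lin l2 p = 0" if "lin l p = 0" for p using ll that by auto
    have q0: "qq l1 l2 ?e = 0" using ll by (auto simp: qq_def dl_dir_self)
    have qa: "a*qq A A' ?e + b*qq B B' ?e = 0" using hq[of ?e] q0 by simp
    have ra: "a*rr A A' ?P ?e + b*rr B B' ?P ?e = 0"
      using DET1[of "rr A A' ?P ?e" "qq B B' ?e" "rr B B' ?P ?e" "qq A A' ?e" a b] bis_iff[OF two Q l] bis qa
        qq_nz[OF Q l] by auto
    let ?g = "\<lambda>p. a*(lin A p * lin A' p) + b*(lin B p * lin B' p)"
    have "?g (pt_at ?P ?e 1) = (a*qq A A' ?e + b*qq B B' ?e) * 1^2 + (a*rr A A' ?P ?e + b*rr B B' ?P ?e) * 1 + ?g ?P"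
      by (simp only: prod_pt_at) (simp add: algebra_simps)
    hence g1: "?g (pt_at ?P ?e 1) = ?g ?P" using qa ra by simp
    have "lin l (pt_at ?P ?e 1) = 0" by (simp add: lin_pt_at P0_on[OF l] dl_dir_self)
    hence z1: "lin l1 (pt_at ?P ?e 1) * lin l2 (pt_at ?P ?e 1) = 0" using z by blast
    have z0: "lin l1 ?P * lin l2 ?P = 0" using z P0_on[OF l] by blast
    have "w1 * fst (pt_at ?P ?e 1) + w2 * snd (pt_at ?P ?e 1) + w0 = w1 * fst ?P + w2 * snd ?P + w0"
      using hform[of "pt_at ?P ?e 1"] hform[of ?P] g1 z1 z0 by simp
    thus ?thesis by (simp add: pt_at_def dir_def algebra_simps)
  qed
  have w1l: "w1 * uL l1 + w2 * tL l1 = 0" and w2l: "w1 * uL l2 + w2 * tL l2 = 0" using wl by auto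
  show ?thesis
  proof (cases "parallel l1 l2")
    case False
    let ?D = "tL l1 * uL l2 - uL l1 * tL l2"
    have D: "?D \<noteq> 0" using False by (simp add: parallel_def)
    have "w2 * ?D = uL l2 * (w1 * uL l1 + w2 * tL l1) - uL l1 * (w1 * uL l2 + w2 * tL l2)"
      by (simp add: algebra_simps)
    hence "w2 * ?D = 0" using w1l w2l by simp
    hence w2z: "w2 = 0" using D by simp
    have "w1 * ?D = - (tL l2 * (w1 * uL l1 + w2 * tL l1) - tL l1 * (w1 * uL l2 + w2 * tL l2))"
      by (simp add: algebra_simps)
    hence "w1 * ?D = 0" using w1l w2l by simp
    hence w1z: "w1 = 0" using D by simp
    have "\<forall>p. a*(lin A p * lin A' p) + b*(lin B p * lin B' p) + (- w0) = 1*(lin l1 p * lin l2 p)"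
    proof
      fix p
      show "a*(lin A p * lin A' p) + b*(lin B p * lin B' p) + (- w0) = 1*(lin l1 p * lin l2 p)"
        using hform[of p] w1z w2z by (simp add: algebra_simps)
    qed
    thus ?thesis using ab by blast
  next
    case True
    have tu: "tL l1 = tL l2" "uL l1 = uL l2" using par_tu[OF l1 l2 True] by auto
    obtain m where m: "w1 = m * tL l1" "w2 = - m * uL l1"
    proof (cases "uL l1 = 0")
      case True
      hence "tL l1 = 1" using l1 by (simp add: is_line_def)
      hence "w1 = w1 * tL l1" "w2 = - w1 * uL l1" using w1l True by auto
      thus ?thesis using that by blast
    next
      case False
      hence u1: "uL l1 = 1" using l1 by (simp add: is_line_def)
      hence "w1 = (- w2) * tL l1" "w2 = - (- w2) * uL l1" using w1l by (auto simp: algebra_simps add_eq_0_iff)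
      thus ?thesis using that by blast
    qed
    define l3 where "l3 = (tL l2, uL l2, vL l2 + m)"
    have l3: "is_line l3" using l2 by (simp add: l3_def is_line_def tL_def uL_def vL_def)
    have lin3: "lin l3 p = lin l2 p + m" for p by (simp add: l3_def lin_def tL_def uL_def vL_def)
    have FI3: "\<forall>p. a*(lin A p * lin A' p) + b*(lin B p * lin B' p) + (- (w0 - m * vL l1)) = 1*(lin l1 p * lin l3 p)"
    proof
      fix p
      have e1: "lin l1 p * lin l3 p = lin l1 p * lin l2 p + m * (tL l1 * fst p - uL l1 * snd p) + m * vL l1"
        by (simp only: lin3) (simp add: lin_def algebra_simps)
      have "a*(lin A p * lin A' p) + b*(lin B p * lin B' p) =
         (a*(lin A p * lin A' p) + b*(lin B p * lin B' p) - lin l1 p * lin l2 p) + lin l1 p * lin l2 p" by simp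
      also have "\<dots> = (w1 * fst p + w2 * snd p + w0) + lin l1 p * lin l2 p" using hform[of p] by simp
      also have "\<dots> = lin l1 p * lin l2 p + m * (tL l1 * fst p - uL l1 * snd p) + w0" using m by (simp add: algebra_simps)
      finally have e2: "a*(lin A p * lin A' p) + b*(lin B p * lin B' p) = lin l1 p * lin l2 p + m * (tL l1 * fst p - uL l1 * snd p) + w0" .
      show "a*(lin A p * lin A' p) + b*(lin B p * lin B' p) + (- (w0 - m * vL l1)) = 1*(lin l1 p * lin l3 p)"
        unfolding e1 e2 by (simp add: algebra_simps)
    qed
    have qp3: "q_pair A B A' B' l1 l3" by (rule FI_qpair[OF two Q l1 l3 ab _ FI3]) simp
    hence anti3: "antipodal A B A' B' l1 l3" by (simp add: q_pair_def)
    obtain p1 p2 where p1: "bis_mid A B A' B' l1 = Fin p1" and p2: "bis_mid A B A' B' l2 = Fin p2"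
      and c2: "midpt p1 p2 = centroid A B A' B'" using anti by (auto simp: antipodal_def)
    obtain p1' p3 where p1': "bis_mid A B A' B' l1 = Fin p1'" and p3: "bis_mid A B A' B' l3 = Fin p3"
      and c3: "midpt p1' p3 = centroid A B A' B'" using anti3 by (auto simp: antipodal_def)
    have "p1' = p1" using p1 p1' by simp
    hence "midpt p1 p2 = midpt p1 p3" using c2 c3 by simp
    hence "p2 = p3" using two by (auto simp: midpt_def prod_eq_iff)
    hence "lin l2 p2 = 0" "lin l3 p2 = 0" using bis_mid_on[OF two l2 p2] bis_mid_on[OF two l3 p3] by auto
    hence m0: "m = 0" using lin3[of p2] by simp
    have "\<forall>p. a*(lin A p * lin A' p) + b*(lin B p * lin B' p) + (- (w0 - m * vL l1)) = 1*(lin l1 p * lin l2 p)"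
      using FI3 m0 lin3 by simp
    thus ?thesis using ab by blast
  qed
qed

lemma QF0:
  fixes P R S e1 e2 u t :: "'a::field"
  assumes two: "(2::'a) \<noteq> 0" and h1: "2*P*e1 + R*e2 = 0" and h2: "R*e1 + 2*S*e2 = 0"
    and h3: "P*u^2 + R*u*t + S*t^2 = 0" and D: "t*e1 - u*e2 \<noteq> 0"
  shows "P = 0 \<and> R = 0 \<and> S = 0"
proof -
  have a: "2 * (t*e1 - u*e2)^2 * P = 0" using h1 h2 h3 by algebra
  have b: "2 * (t*e1 - u*e2)^2 * S = 0" using h1 h2 h3 by algebra
  have c: "2 * (t*e1 - u*e2)^2 * R = 0" using h1 h2 h3 by algebra
  show ?thesis using a b c two D by simp
qed

lemma EX_E:
  fixes l1 l2 :: "'a::field ln"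
  assumes l1: "is_line l1" and l2: "is_line l2"
  shows "\<exists>e. dl l1 e \<noteq> 0 \<and> dl l2 e \<noteq> 0"
proof (cases "uL l1 = 0")
  case u1: True
  hence t1: "tL l1 = 1" using l1 by (simp add: is_line_def)
  show ?thesis
  proof (cases "uL l2 = 0")
    case True
    hence "tL l2 = 1" using l2 by (simp add: is_line_def)
    hence "dl l1 (1,0) \<noteq> 0 \<and> dl l2 (1,0) \<noteq> 0" using t1 by (simp add: dl_def)
    thus ?thesis by blast
  next
    case False
    hence u2: "uL l2 = 1" using l2 by (simp add: is_line_def)
    show ?thesis
    proof (cases "tL l2 = 0")
      case True
      hence "dl l1 (1,1) \<noteq> 0 \<and> dl l2 (1,1) \<noteq> 0" using t1 u1 u2 by (simp add: dl_def)
      thus ?thesis by blast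
    next
      case False
      hence "dl l1 (1,0) \<noteq> 0 \<and> dl l2 (1,0) \<noteq> 0" using t1 by (simp add: dl_def)
      thus ?thesis by blast
    qed
  qed
next
  case False
  hence u1: "uL l1 = 1" using l1 by (simp add: is_line_def)
  show ?thesis
  proof (cases "uL l2 = 0")
    case u2: True
    hence t2: "tL l2 = 1" using l2 by (simp add: is_line_def)
    show ?thesis
    proof (cases "tL l1 = 0")
      case True
      hence "dl l1 (1,1) \<noteq> 0 \<and> dl l2 (1,1) \<noteq> 0" using t2 u1 u2 by (simp add: dl_def)
      thus ?thesis by blast
    next
      case False
      hence "dl l1 (1,0) \<noteq> 0 \<and> dl l2 (1,0) \<noteq> 0" using t2 by (simp add: dl_def)
      thus ?thesis by blast
    qed
  next
    case False
    hence u2: "uL l2 = 1" using l2 by (simp add: is_line_def)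
    hence "dl l1 (0,1) \<noteq> 0 \<and> dl l2 (0,1) \<noteq> 0" using u1 by (simp add: dl_def)
    thus ?thesis by blast
  qed
qed

lemma two_pts:
  fixes l1 l2 :: "'a::field ln"
  assumes l1: "is_line l1" and l2: "is_line l2" and h: "lin l1 p = 0" "lin l2 p = 0" "lin l1 q = 0" "lin l2 q = 0"
    and pq: "p \<noteq> q"
  shows "l1 = l2"
proof (cases "parallel l1 l2")
  case True
  show ?thesis using par_point_eq[OF l1 l2 True h(1,2)] .
next
  case False
  thus ?thesis using meet_uniq[OF False h] pq by simp
qed

lemma QR:
  fixes ka ps ph s1 s2 :: "'a::field"
  assumes k: "ka \<noteq> 0" and R: "\<And>s. ka*s^2 + ps*s + ph = 0 \<longleftrightarrow> s = s1 \<or> s = s2"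
  shows "ph = ka*s1*s2"
proof -
  define s' where "s' = - ps/ka - s1"
  have r1: "ka*s1^2 + ps*s1 + ph = 0" using R by simp
  have fac: "ka*s^2 + ps*s + ph = (s - s1) * (ka*(s + s1) + ps)" for s
    using r1 by (simp add: power2_eq_square algebra_simps)
  have "ka*(s' + s1) + ps = 0" using k by (simp add: s'_def field_simps)
  hence "ka*s'^2 + ps*s' + ph = 0" using fac[of s'] by simp
  hence s'r: "s' = s1 \<or> s' = s2" using R by simp
  have ph: "ph = ka * s1 * s'"
  proof -
    have hh: "ka * s1 * s' = - ps * s1 - ka * s1^2" using k by (simp add: s'_def power2_eq_square field_simps)
    show ?thesis using hh r1 by algebra
  qed
  show ?thesis
  proof (cases "s' = s2")
    case True thus ?thesis using ph by simp
  next
    case False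
    hence s's1: "s' = s1" using s'r by simp
    have "s2 = s1"
    proof (rule ccontr)
      assume ne: "s2 \<noteq> s1"
      have "ka*s2^2 + ps*s2 + ph = 0" using R by simp
      hence "(s2 - s1) * (ka*(s2 + s1) + ps) = 0" using fac[of s2] by simp
      hence "ka*(s2 + s1) + ps = 0" using ne by simp
      hence e: "ka*(s2 + s1) = - ps" by (simp only: eq_neg_iff_add_eq_0)
      have "s2 + s1 = ka*(s2 + s1)/ka" using k by simp
      also have "\<dots> = - ps/ka" using e by simp
      finally have "s2 = - ps/ka - s1" by (simp add: algebra_simps)
      hence "s2 = s'" by (simp add: s'_def)
      thus False using ne s's1 by simp
    qed
    thus ?thesis using ph s's1 by simp
  qed
qed

lemma root_lin:
  fixes x d s :: "'a::field"
  assumes "d \<noteq> 0"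
  shows "x + s * d = 0 \<longleftrightarrow> s = - x / d"
proof -
  have "x + s * d = 0 \<longleftrightarrow> s * d = - x" by (simp add: eq_neg_iff_add_eq_0 add.commute)
  also have "\<dots> \<longleftrightarrow> s = - x / d" using assms by (simp only: eq_divide_eq) simp
  finally show ?thesis .
qed

lemma DEG_FI:
  fixes A B A' B' l1 l2 :: "'a::field ln"
  assumes two: "(2::'a) \<noteq> 0" and Q: "is_quad A B A' B'" and l1: "is_line l1" and l2: "is_line l2"
    and ab: "a \<noteq> 0 \<or> b \<noteq> 0"
    and Z: "{p. a*(lin A p * lin A' p) + b*(lin B p * lin B' p) + c = 0} = line_set l1 \<union> line_set l2"
  shows "\<exists>k. k \<noteq> 0 \<and> (\<forall>p. a*(lin A p * lin A' p) + b*(lin B p * lin B' p) + c = k*(lin l1 p * lin l2 p))"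
proof -
  define g where "g = (\<lambda>p. a*(lin A p * lin A' p) + b*(lin B p * lin B' p))"
  have Zp: "g p + c = 0 \<longleftrightarrow> lin l1 p = 0 \<or> lin l2 p = 0" for p
  proof -
    have "p \<in> {p. a*(lin A p * lin A' p) + b*(lin B p * lin B' p) + c = 0} \<longleftrightarrow> p \<in> line_set l1 \<union> line_set l2"
      using Z by simp
    thus ?thesis by (simp add: g_def line_set_def on_line_def)
  qed
  obtain e where d1: "dl l1 e \<noteq> 0" and d2: "dl l2 e \<noteq> 0" using EX_E[OF l1 l2] by blast
  define ka where "ka = a*qq A A' e + b*qq B B' e"
  define ps where "ps = (\<lambda>P. a*rr A A' P e + b*rr B B' P e)"
  have exp: "g (pt_at P e s) + c = ka*s^2 + ps P*s + (g P + c)" for P s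
    by (simp only: g_def prod_pt_at ka_def ps_def) (simp add: algebra_simps)
  have roots: "ka*s^2 + ps P*s + (g P + c) = 0 \<longleftrightarrow> s = - lin l1 P / dl l1 e \<or> s = - lin l2 P / dl l2 e" for P s
    using Zp[of "pt_at P e s"] exp[of P s] root_lin[OF d1, of "lin l1 P" s] root_lin[OF d2, of "lin l2 P" s]
    by (simp add: lin_pt_at)
  have kanz: "ka \<noteq> 0"
  proof
    assume ka0: "ka = 0"
    show False
    proof (cases "l1 = l2")
      case True
      have psnz: "ps P \<noteq> 0" for P
      proof
        assume ps0: "ps P = 0"
        let ?s1 = "- lin l1 P / dl l1 e"
        have "g P + c = 0" using roots[of ?s1 P] ka0 ps0 by simp
        hence "?s1 + 1 = ?s1" using roots[of "?s1 + 1" P] ka0 ps0 True by simp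
        thus False by simp
      qed
      define Pc where "Pc = a*cp A A' + b*cp B B'"
      define Rc where "Rc = a*cr A A' + b*cr B B'"
      define Sc where "Sc = a*cs A A' + b*cs B B'"
      define W1 where "W1 = a*cw1 A A' + b*cw1 B B'"
      define W2 where "W2 = a*cw2 A A' + b*cw2 B B'"
      have psf: "ps P = (2*Pc*fst e + Rc*snd e) * fst P + (Rc*fst e + 2*Sc*snd e) * snd P + (W1*fst e + W2*snd e)" for P
        by (simp add: ps_def rr_coef Pc_def Rc_def Sc_def W1_def W2_def algebra_simps)
      have h1: "2*Pc*fst e + Rc*snd e = 0"
      proof (rule ccontr)
        assume nz: "2*Pc*fst e + Rc*snd e \<noteq> 0"
        have "ps (- (W1*fst e + W2*snd e) / (2*Pc*fst e + Rc*snd e), 0) = 0"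
          using nz by (simp add: psf)
        thus False using psnz by blast
      qed
      have h2: "Rc*fst e + 2*Sc*snd e = 0"
      proof (rule ccontr)
        assume nz: "Rc*fst e + 2*Sc*snd e \<noteq> 0"
        have "ps (0, - (W1*fst e + W2*snd e) / (Rc*fst e + 2*Sc*snd e)) = 0"
          using nz by (simp add: psf)
        thus False using psnz by blast
      qed
      have h3: "Pc*(uL l1)^2 + Rc*uL l1*tL l1 + Sc*(tL l1)^2 = 0"
      proof -
        let ?P = "P0 l1" and ?d = "dir l1"
        have "\<And>s. (a*qq A A' ?d + b*qq B B' ?d) * s^2 + (a*rr A A' ?P ?d + b*rr B B' ?P ?d) * s + (g ?P + c) = 0"
        proof -
          fix s
          have "lin l1 (pt_at ?P ?d s) = 0" by (simp add: lin_pt_at P0_on[OF l1] dl_dir_self)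
          hence "g (pt_at ?P ?d s) + c = 0" using Zp by blast
          thus "(a*qq A A' ?d + b*qq B B' ?d) * s^2 + (a*rr A A' ?P ?d + b*rr B B' ?P ?d) * s + (g ?P + c) = 0"
            by (simp only: g_def prod_pt_at) (simp add: algebra_simps)
        qed
        hence "a*qq A A' ?d + b*qq B B' ?d = 0" using QZ[OF two] by blast
        thus ?thesis by (simp add: qq_coef dir_def Pc_def Rc_def Sc_def algebra_simps)
      qed
      have D: "tL l1 * fst e - uL l1 * snd e \<noteq> 0" using d1 by (simp add: dl_def)
      have "Pc = 0 \<and> Rc = 0 \<and> Sc = 0" by (rule QF0[OF two h1 h2 h3 D])
      hence "a = 0 \<and> b = 0" using IND[OF Q, of a b] unfolding Pc_def Rc_def Sc_def by blast
      thus False using ab by simp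
    next
      case False
      let ?P = "P0 l1" and ?Q = "pt_at (P0 l1) (dir l1) 1"
      have on1: "lin l1 ?P = 0" "lin l1 ?Q = 0" by (simp_all add: lin_pt_at P0_on[OF l1] dl_dir_self)
      have ne: "?P \<noteq> ?Q" using dir_nz[OF l1] by (auto simp: pt_at_def prod_eq_iff)
      obtain P where P1: "lin l1 P = 0" and P2: "lin l2 P \<noteq> 0"
        using two_pts[OF l1 l2 on1(1) _ on1(2) _ ne] False on1 by metis
      let ?s2 = "- lin l2 P / dl l2 e"
      have s1z: "- lin l1 P / dl l1 e = 0" using P1 by simp
      have s2nz: "?s2 \<noteq> 0" using P2 d2 by simp
      have gP: "g P + c = 0" using Zp P1 by blast
      have "ps P * ?s2 = 0" using roots[of ?s2 P] ka0 gP by simp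
      hence ps0: "ps P = 0" using s2nz by simp
      have r1: "(1::'a) = 0 \<or> 1 = ?s2" using roots[of 1 P] ka0 ps0 gP P1 by simp
      have r2: "(-1::'a) = 0 \<or> -1 = ?s2" using roots[of "-1" P] ka0 ps0 gP P1 by simp
      have "(1::'a) = -1" using r1 r2 by auto
      hence "(2::'a) = 0" by (metis add_eq_0_iff one_add_one)
      thus False using two by simp
    qed
  qed
  define k where "k = ka / (dl l1 e * dl l2 e)"
  have k: "k \<noteq> 0" using kanz d1 d2 by (simp add: k_def)
  have "\<forall>p. a*(lin A p * lin A' p) + b*(lin B p * lin B' p) + c = k*(lin l1 p * lin l2 p)"
  proof
    fix p
    have "g p + c = ka * (- lin l1 p / dl l1 e) * (- lin l2 p / dl l2 e)"
      by (rule QR[OF kanz roots])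
    also have "\<dots> = k*(lin l1 p * lin l2 p)" using d1 d2 by (simp add: k_def field_simps)
    finally show "a*(lin A p * lin A' p) + b*(lin B p * lin B' p) + c = k*(lin l1 p * lin l2 p)"
      by (simp add: g_def)
  qed
  thus ?thesis using k by blast
qed

theorem theorem6p4:
  fixes A B A' B' l1 l2 :: "'a::field ln"
  assumes "(2::'a) \<noteq> 0"
    and "is_quad A B A' B'"
    and "is_line l1" and "is_line l2"
  shows "q_pair A B A' B' l1 l2 \<longleftrightarrow> (\<exists>f \<in> pencil A B A' B'. degeneration l1 l2 f)"
proof
  assume qp: "q_pair A B A' B' l1 l2"
  obtain a b c where ab: "a \<noteq> 0 \<or> b \<noteq> 0"
    and FI: "\<forall>p. a*(lin A p * lin A' p) + b*(lin B p * lin B' p) + c = 1*(lin l1 p * lin l2 p)"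
    using QP_FI[OF assms qp] by blast
  let ?f = "\<lambda>p. a*(lin A p * lin A' p) + b*(lin B p * lin B' p)"
  have "?f \<in> pencil A B A' B'" unfolding pencil_def using ab by blast
  moreover have "degeneration l1 l2 ?f"
  proof -
    have "{p. ?f p + c = 0} = line_set l1 \<union> line_set l2"
      using FI by (auto simp: line_set_def on_line_def)
    thus ?thesis unfolding degeneration_def by blast
  qed
  ultimately show "\<exists>f \<in> pencil A B A' B'. degeneration l1 l2 f" by blast
next
  assume "\<exists>f \<in> pencil A B A' B'. degeneration l1 l2 f"
  then obtain f where fp: "f \<in> pencil A B A' B'" and dg: "degeneration l1 l2 f" by blast
  obtain a b where fd: "f = (\<lambda>p. a*(lin A p * lin A' p) + b*(lin B p * lin B' p))" and ab: "a \<noteq> 0 \<or> b \<noteq> 0"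
    using fp unfolding pencil_def by blast
  obtain c where Z: "{p. f p + c = 0} = line_set l1 \<union> line_set l2" using dg unfolding degeneration_def by blast
  have Z': "{p. a*(lin A p * lin A' p) + b*(lin B p * lin B' p) + c = 0} = line_set l1 \<union> line_set l2"
    using Z by (simp add: fd)
  obtain k where k: "k \<noteq> 0"
    and FI: "\<forall>p. a*(lin A p * lin A' p) + b*(lin B p * lin B' p) + c = k*(lin l1 p * lin l2 p)"
    using DEG_FI[OF assms ab Z'] by blast
  show "q_pair A B A' B' l1 l2" by (rule FI_qpair[OF assms ab k FI])
qed

end
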